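(* For every term $M$ of the distant Bang calculus $\mathtt{dBang}$, the set $\mathcal A(M)$ of Böhm approximants of $M$ is an ideal for the order $\sqsubseteq$, i.e. it is downward closed among approximants and directed: for all $A_1,A_2\in\mathcal A(M)$ there is $A_3\in\mathcal A(M)$ with $A_1\sqsubseteq A_3$ and $A_2\sqsubseteq A_3$.
   Context: \textbf{dBang.} Terms: $M,N ::= x \mid \lambda x.M \mid MN \mid M[N/x] \mid\ !M \mid \mathrm{der}\,M$, where $M[N/x]$ is an explicit substitution binding $x$ in $M$; terms up to $\alpha$-conversion, $M\{N/x\}$ capture-avoiding substitution. List contexts: $L ::= \square \mid L[N/x]$. Root rules: $L\langle\lambda x.M\rangle N \mapsto L\langle M[N/x]\rangle$; $M[L\langle !N\rangle/x]\mapsto L\langle M\{N/x\}\rangle$; $\mathrm{der}(L\langle !N\rangle)\mapsto L\langle N\rangle$. Full reduction $\to$ is their closure under arbitrary contexts. \textbf{Approximants.} Extend the syntax with a constant $\bot$. $A\sqsubseteq B$ means $A$ is obtained from $B$ by replacing some subterms by $\bot$. An approximant is a term of the extended syntax with no subterm of any of the forms $L\langle\lambda x.A\rangle B$, $L\langle\bot\rangle B$, $\mathrm{der}(L\langle !A\rangle)$, $\mathrm{der}(L\langle\bot\rangle)$, $A[L\langle !B\rangle/x]$, $A[L\langle\bot\rangle/x]$. $\mathcal A(M)=\{A\text{ approximant}\mid\exists N,\ M\to^*N,\ A\sqsubseteq N\}$. *)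

theory Defs
  imports Main
begin

text \<open>Terms of dBang extended with the constant Bot, in locally nameless / de Bruijn
style (terms up to alpha-conversion). ES t u represents t[u/x], binding index 0 in t.\<close>

datatype trm =
    Var nat
  | Lam trm
  | App trm trm
  | ES trm trm
  | Bang trm
  | Der trm
  | Bot

fun bot_free :: "trm \<Rightarrow> bool" where
  "bot_free (Var i) = True"
| "bot_free (Lam t) = bot_free t"
| "bot_free (App t u) = (bot_free t \<and> bot_free u)"
| "bot_free (ES t u) = (bot_free t \<and> bot_free u)"
| "bot_free (Bang t) = bot_free t"
| "bot_free (Der t) = bot_free t"
| "bot_free Bot = False"

fun lift :: "nat \<Rightarrow> nat \<Rightarrow> trm \<Rightarrow> trm" where
  "lift n k (Var i) = (if i < k then Var i else Var (i + n))"
| "lift n k (Lam t) = Lam (lift n (Suc k) t)"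
| "lift n k (App t u) = App (lift n k t) (lift n k u)"
| "lift n k (ES t u) = ES (lift n (Suc k) t) (lift n k u)"
| "lift n k (Bang t) = Bang (lift n k t)"
| "lift n k (Der t) = Der (lift n k t)"
| "lift n k Bot = Bot"

fun subst :: "trm \<Rightarrow> nat \<Rightarrow> trm \<Rightarrow> trm" where
  "subst (Var i) k s = (if i < k then Var i else if i = k then s else Var (i - 1))"
| "subst (Lam t) k s = Lam (subst t (Suc k) (lift 1 0 s))"
| "subst (App t u) k s = App (subst t k s) (subst u k s)"
| "subst (ES t u) k s = ES (subst t (Suc k) (lift 1 0 s)) (subst u k s)"
| "subst (Bang t) k s = Bang (subst t k s)"
| "subst (Der t) k s = Der (subst t k s)"
| "subst Bot k s = Bot"

text \<open>List contexts L ::= \<box> | L[N/x]; a list [N1,...,Nk] denotes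
(\<dots>(\<box>[Nk/xk])\<dots>)[N1/x1], i.e. plug (N # L) P = (plug L P)[N/x].\<close>
fun plug :: "trm list \<Rightarrow> trm \<Rightarrow> trm" where
  "plug [] P = P"
| "plug (N # L) P = ES (plug L P) N"

inductive root_step :: "trm \<Rightarrow> trm \<Rightarrow> bool" where
  dB:  "root_step (App (plug L (Lam M)) N) (plug L (ES M (lift (length L) 0 N)))"
| sbang: "root_step (ES M (plug L (Bang N))) (plug L (subst (lift (length L) 1 M) 0 N))"
| dbang: "root_step (Der (plug L (Bang N))) (plug L N)"

inductive step :: "trm \<Rightarrow> trm \<Rightarrow> bool" where
  root: "root_step t u \<Longrightarrow> step t u"
| lam: "step t u \<Longrightarrow> step (Lam t) (Lam u)"
| appL: "step t u \<Longrightarrow> step (App t s) (App u s)"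
| appR: "step t u \<Longrightarrow> step (App s t) (App s u)"
| esL: "step t u \<Longrightarrow> step (ES t s) (ES u s)"
| esR: "step t u \<Longrightarrow> step (ES s t) (ES s u)"
| bang: "step t u \<Longrightarrow> step (Bang t) (Bang u)"
| der: "step t u \<Longrightarrow> step (Der t) (Der u)"

inductive approx_le :: "trm \<Rightarrow> trm \<Rightarrow> bool" (infix "\<sqsubseteq>" 50) where
  bot: "Bot \<sqsubseteq> B"
| var: "Var i \<sqsubseteq> Var i"
| lam: "A \<sqsubseteq> B \<Longrightarrow> Lam A \<sqsubseteq> Lam B"
| app: "A \<sqsubseteq> B \<Longrightarrow> A' \<sqsubseteq> B' \<Longrightarrow> App A A' \<sqsubseteq> App B B'"
| es: "A \<sqsubseteq> B \<Longrightarrow> A' \<sqsubseteq> B' \<Longrightarrow> ES A A' \<sqsubseteq> ES B B'"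
| bang: "A \<sqsubseteq> B \<Longrightarrow> Bang A \<sqsubseteq> Bang B"
| der: "A \<sqsubseteq> B \<Longrightarrow> Der A \<sqsubseteq> Der B"

fun subterms :: "trm \<Rightarrow> trm set" where
  "subterms (Var i) = {Var i}"
| "subterms (Lam t) = insert (Lam t) (subterms t)"
| "subterms (App t u) = insert (App t u) (subterms t \<union> subterms u)"
| "subterms (ES t u) = insert (ES t u) (subterms t \<union> subterms u)"
| "subterms (Bang t) = insert (Bang t) (subterms t)"
| "subterms (Der t) = insert (Der t) (subterms t)"
| "subterms Bot = {Bot}"

definition forbidden :: "trm \<Rightarrow> bool" where
  "forbidden S \<longleftrightarrow>
     (\<exists>L A B. S = App (plug L (Lam A)) B) \<or>
     (\<exists>L B. S = App (plug L Bot) B) \<or>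
     (\<exists>L A. S = Der (plug L (Bang A))) \<or>
     (\<exists>L. S = Der (plug L Bot)) \<or>
     (\<exists>L A B. S = ES A (plug L (Bang B))) \<or>
     (\<exists>L A. S = ES A (plug L Bot))"

definition approximant :: "trm \<Rightarrow> bool" where
  "approximant A \<longleftrightarrow> (\<forall>S \<in> subterms A. \<not> forbidden S)"

definition approximants :: "trm \<Rightarrow> trm set" ("\<A>") where
  "\<A> M = {A. approximant A \<and> (\<exists>N. step\<^sup>*\<^sup>* M N \<and> A \<sqsubseteq> N)}"

end

theory Submission
  imports Defs
begin


lemma lift_0[simp]: "lift 0 k t = t"
  by (induction t arbitrary: k) auto

lemma lift_lift_merge:
  "i \<le> k \<Longrightarrow> k \<le> i + m \<Longrightarrow> lift n k (lift m i t) = lift (n+m) i t"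
  by (induction t arbitrary: i k) auto

lemma lift_lift_comm:
  "i \<le> k \<Longrightarrow> lift n i (lift m k t) = lift m (k+n) (lift n i t)"
  by (induction t arbitrary: i k) auto

lemma subst_lift_cancel:
  "k \<le> j \<Longrightarrow> j \<le> k + n \<Longrightarrow> subst (lift (Suc n) k t) j s = lift n k t"
  by (induction t arbitrary: k j s) auto

lemma lift_subst1:
  "k \<le> i \<Longrightarrow> lift n i (subst t k s) = subst (lift n (Suc i) t) k (lift n i s)"
proof (induction t arbitrary: i k s)
  case (Lam t) then show ?case by (simp add: lift_lift_comm)
next
  case (ES t u) then show ?case by (simp add: lift_lift_comm)
qed auto

lemma lift_subst2:
  "i \<le> k \<Longrightarrow> lift n i (subst t k s) = subst (lift n i t) (k+n) (lift n i s)"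
proof (induction t arbitrary: i k s)
  case (Var x) then show ?case by auto
next
  case (Lam t) then show ?case by (simp add: lift_lift_comm)
next
  case (ES t u) then show ?case by (simp add: lift_lift_comm)
qed auto

lemma subst_subst:
  "i \<le> j \<Longrightarrow> subst (subst t i u) j v = subst (subst t (Suc j) (lift 1 i v)) i (subst u j v)"
proof (induction t arbitrary: i j u v)
  case (Var x)
  then show ?case using subst_lift_cancel[of i j 0 "subst u j v"] by (auto simp: subst_lift_cancel)
next
  case (Lam t)
  have a: "lift (Suc 0) 0 (lift (Suc 0) i v) = lift (Suc 0) (Suc i) (lift (Suc 0) 0 v)" using lift_lift_comm[of 0 i 1 1 v] by simp
  have b: "lift (Suc 0) 0 (subst u j v) = subst (lift (Suc 0) 0 u) (Suc j) (lift (Suc 0) 0 v)" using lift_subst2[of 0 j 1 u v] by simp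
  show ?case using Lam by (simp add: a b)
next
  case (ES t w)
  have a: "lift (Suc 0) 0 (lift (Suc 0) i v) = lift (Suc 0) (Suc i) (lift (Suc 0) 0 v)" using lift_lift_comm[of 0 i 1 1 v] by simp
  have b: "lift (Suc 0) 0 (subst u j v) = subst (lift (Suc 0) 0 u) (Suc j) (lift (Suc 0) 0 v)" using lift_subst2[of 0 j 1 u v] by simp
  show ?case using ES by (simp add: a b)
qed auto


fun liftL :: "nat \<Rightarrow> nat \<Rightarrow> trm list \<Rightarrow> trm list" where
  "liftL n k [] = []"
| "liftL n k (N # L) = lift n k N # liftL n (Suc k) L"

fun substL :: "trm list \<Rightarrow> nat \<Rightarrow> trm \<Rightarrow> trm list" where
  "substL [] k s = []"
| "substL (N # L) k s = subst N k s # substL L (Suc k) (lift 1 0 s)"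

lemma length_liftL[simp]: "length (liftL n k L) = length L"
  by (induction L arbitrary: k) auto

lemma length_substL[simp]: "length (substL L k s) = length L"
  by (induction L arbitrary: k s) auto

lemma plug_append: "plug (L1 @ L2) H = plug L1 (plug L2 H)"
  by (induction L1) auto

lemma lift_plug: "lift n k (plug L H) = plug (liftL n k L) (lift n (k + length L) H)"
  by (induction L arbitrary: k) auto

lemma lift_lift00[simp]: "lift n 0 (lift m 0 s) = lift (n+m) 0 s"
  using lift_lift_merge[of 0 0 m n s] by simp

lemma lift_lift0: "lift m 0 (lift (Suc 0) 0 s) = lift (Suc m) 0 s"
  using lift_lift_merge[of 0 0 1 m s] by simp

lemma subst_plug: "subst (plug L H) k s = plug (substL L k s) (subst H (k + length L) (lift (length L) 0 s))"
  by (induction L arbitrary: k s) (auto simp: lift_lift0)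

inductive par :: "trm \<Rightarrow> trm \<Rightarrow> bool" (infix "\<Rrightarrow>" 50) where
  pvar: "Var i \<Rrightarrow> Var i"
| pbot: "Bot \<Rrightarrow> Bot"
| plam: "t \<Rrightarrow> t' \<Longrightarrow> Lam t \<Rrightarrow> Lam t'"
| papp: "t \<Rrightarrow> t' \<Longrightarrow> u \<Rrightarrow> u' \<Longrightarrow> App t u \<Rrightarrow> App t' u'"
| pes: "t \<Rrightarrow> t' \<Longrightarrow> u \<Rrightarrow> u' \<Longrightarrow> ES t u \<Rrightarrow> ES t' u'"
| pbang: "t \<Rrightarrow> t' \<Longrightarrow> Bang t \<Rrightarrow> Bang t'"
| pder: "t \<Rrightarrow> t' \<Longrightarrow> Der t \<Rrightarrow> Der t'"
| pdB: "t \<Rrightarrow> plug L (Lam M) \<Longrightarrow> u \<Rrightarrow> u' \<Longrightarrow> App t u \<Rrightarrow> plug L (ES M (lift (length L) 0 u'))"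
| psb: "t \<Rrightarrow> plug L (Bang N) \<Longrightarrow> M \<Rrightarrow> M' \<Longrightarrow> ES M t \<Rrightarrow> plug L (subst (lift (length L) 1 M') 0 N)"
| pd: "t \<Rrightarrow> plug L (Bang N) \<Longrightarrow> Der t \<Rrightarrow> plug L N"

lemma par_refl[simp]: "t \<Rrightarrow> t"
  by (induction t) (auto intro: par.intros)

lemma par_lift: "t \<Rrightarrow> t' \<Longrightarrow> lift n k t \<Rrightarrow> lift n k t'"
proof (induction arbitrary: k rule: par.induct)
  case (pdB t L M u u')
  have "lift n k t \<Rrightarrow> plug (liftL n k L) (Lam (lift n (Suc (k + length L)) M))"
    using pdB.IH(1)[of k] by (simp add: lift_plug)
  from par.pdB[OF this pdB.IH(2)[of k]]
  have "App (lift n k t) (lift n k u) \<Rrightarrow> plug (liftL n k L) (ES (lift n (Suc (k + length L)) M) (lift (length L) 0 (lift n k u')))"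
    by simp
  moreover have "lift n (k + length L) (lift (length L) 0 u') = lift (length L) 0 (lift n k u')"
    using lift_lift_comm[of 0 k "length L" n u'] by simp
  ultimately show ?case by (simp add: lift_plug)
next
  case (psb t L N M M')
  have "lift n k t \<Rrightarrow> plug (liftL n k L) (Bang (lift n (k + length L) N))"
    using psb.IH(1)[of k] by (simp add: lift_plug)
  from par.psb[OF this psb.IH(2)[of "Suc k"]]
  have "ES (lift n (Suc k) M) (lift n k t) \<Rrightarrow> plug (liftL n k L) (subst (lift (length L) 1 (lift n (Suc k) M')) 0 (lift n (k + length L) N))"
    by simp
  moreover have "lift n (k + length L) (subst (lift (length L) 1 M') 0 N)
     = subst (lift n (Suc (k + length L)) (lift (length L) 1 M')) 0 (lift n (k + length L) N)"
    by (rule lift_subst1) simp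
  moreover have "lift n (Suc (k + length L)) (lift (length L) 1 M') = lift (length L) 1 (lift n (Suc k) M')"
    using lift_lift_comm[of 1 "Suc k" "length L" n M'] by simp
  ultimately show ?case by (simp add: lift_plug)
next
  case (pd t L N)
  then show ?case by (simp add: lift_plug) (metis lift_plug par.pd)
qed (auto intro: par.intros)

lemma par_subst: "t \<Rrightarrow> t' \<Longrightarrow> s \<Rrightarrow> s' \<Longrightarrow> subst t k s \<Rrightarrow> subst t' k s'"
proof (induction arbitrary: k s s' rule: par.induct)
  case (plam t t')
  show ?case using plam.IH[OF par_lift[OF plam.prems]] by (simp add: par.plam)
next
  case (pes t t' u u')
  show ?case using pes.IH(1)[OF par_lift[OF pes.prems]] pes.IH(2)[OF pes.prems] by (simp add: par.pes)
next
  case (pdB t L M u u')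
  have "subst t k s \<Rrightarrow> plug (substL L k s') (Lam (subst M (Suc (k + length L)) (lift (Suc (length L)) 0 s')))"
    using pdB.IH(1)[OF pdB.prems, of k] by (simp add: subst_plug lift_lift0)
  from par.pdB[OF this pdB.IH(2)[OF pdB.prems, of k]]
  have "App (subst t k s) (subst u k s) \<Rrightarrow> plug (substL L k s') (ES (subst M (Suc (k + length L)) (lift (Suc (length L)) 0 s')) (lift (length L) 0 (subst u' k s')))"
    by simp
  moreover have "subst (lift (length L) 0 u') (k + length L) (lift (length L) 0 s') = lift (length L) 0 (subst u' k s')"
    using lift_subst2[of 0 k "length L" u' s'] by simp
  ultimately show ?case by (simp add: subst_plug lift_lift0)
next
  case (psb t L N M M')
  have "subst t k s \<Rrightarrow> plug (substL L k s') (Bang (subst N (k + length L) (lift (length L) 0 s')))"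
    using psb.IH(1)[OF psb.prems, of k] by (simp add: subst_plug)
  from par.psb[OF this psb.IH(2)[OF par_lift[OF psb.prems], of "Suc k" 1 0]]
  have "ES (subst M (Suc k) (lift 1 0 s)) (subst t k s) \<Rrightarrow> plug (substL L k s') (subst (lift (length L) 1 (subst M' (Suc k) (lift 1 0 s'))) 0 (subst N (k + length L) (lift (length L) 0 s')))"
    by simp
  moreover have "subst (subst (lift (length L) 1 M') 0 N) (k + length L) (lift (length L) 0 s')
     = subst (subst (lift (length L) 1 M') (Suc (k + length L)) (lift 1 0 (lift (length L) 0 s'))) 0 (subst N (k + length L) (lift (length L) 0 s'))"
    by (rule subst_subst) simp
  moreover have "lift 1 0 (lift (length L) 0 s') = lift (length L) 1 (lift 1 0 s')"
    using lift_lift_merge[of 0 0 1 "length L" s'] lift_lift_merge[of 0 1 1 "length L" s'] by simp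
  moreover have "lift (length L) 1 (subst M' (Suc k) (lift 1 0 s')) = subst (lift (length L) 1 M') (Suc k + length L) (lift (length L) 1 (lift 1 0 s'))"
    by (rule lift_subst2) simp
  ultimately show ?case by (simp add: subst_plug)
next
  case (pd t L N)
  then show ?case by (simp add: subst_plug) (metis subst_plug par.pd)
qed (auto intro: par.intros)



inductive_cases parLamE: "Lam M \<Rrightarrow> w"
inductive_cases parBangE: "Bang M \<Rrightarrow> w"
inductive_cases parESE: "ES t u \<Rrightarrow> w"

lemma parES_inv: "ES t u \<Rrightarrow> w \<Longrightarrow> (\<exists>t' u'. w = ES t' u' \<and> t \<Rrightarrow> t' \<and> u \<Rrightarrow> u') \<or>
   (\<exists>L N M'. u \<Rrightarrow> plug L (Bang N) \<and> t \<Rrightarrow> M' \<and> w = plug L (subst (lift (length L) 1 M') 0 N))"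
  by (erule parESE; simp; blast)

lemma K_lam:
  "plug L (Lam M) \<Rrightarrow> w \<Longrightarrow> \<exists>L2 M2. w = plug L2 (Lam M2) \<and>
     (\<forall>X X'. X \<Rrightarrow> X' \<longrightarrow> plug L (ES M (lift (length L) 0 X)) \<Rrightarrow> plug L2 (ES M2 (lift (length L2) 0 X')))"
proof (induction L arbitrary: w)
  case Nil
  then show ?case by (auto elim!: parLamE intro!: exI[of _ "[]"] par.pes)
next
  case (Cons N L0)
  from Cons.prems have "ES (plug L0 (Lam M)) N \<Rrightarrow> w" by simp
  then consider (pes) w0 N' where "w = ES w0 N'" "plug L0 (Lam M) \<Rrightarrow> w0" "N \<Rrightarrow> N'"
    | (psb) L3 Q M0' where "N \<Rrightarrow> plug L3 (Bang Q)" "plug L0 (Lam M) \<Rrightarrow> M0'" "w = plug L3 (subst (lift (length L3) 1 M0') 0 Q)"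
    using parES_inv by blast
  then show ?case
  proof cases
    case pes
    from Cons.IH[OF pes(2)] obtain L2 M2 where w0: "w0 = plug L2 (Lam M2)"
      and P: "\<forall>X X'. X \<Rrightarrow> X' \<longrightarrow> plug L0 (ES M (lift (length L0) 0 X)) \<Rrightarrow> plug L2 (ES M2 (lift (length L2) 0 X'))"
      by blast
    show ?thesis
    proof (intro exI conjI allI impI)
      show "w = plug (N' # L2) (Lam M2)" using pes w0 by simp
      fix X X' assume "X \<Rrightarrow> X'"
      then have "lift 1 0 X \<Rrightarrow> lift 1 0 X'" by (rule par_lift)
      with P have "plug L0 (ES M (lift (length L0) 0 (lift 1 0 X))) \<Rrightarrow> plug L2 (ES M2 (lift (length L2) 0 (lift 1 0 X')))"
        by blast
      then show "plug (N # L0) (ES M (lift (length (N # L0)) 0 X)) \<Rrightarrow> plug (N' # L2) (ES M2 (lift (length (N' # L2)) 0 X'))"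
        using pes by (auto intro: par.pes)
    qed
  next
    case psb
    from Cons.IH[OF psb(2)] obtain L2 M2 where w0: "M0' = plug L2 (Lam M2)"
      and P: "\<forall>X X'. X \<Rrightarrow> X' \<longrightarrow> plug L0 (ES M (lift (length L0) 0 X)) \<Rrightarrow> plug L2 (ES M2 (lift (length L2) 0 X'))"
      by blast
    define n where "n = length L3"
    define m where "m = length L2"
    define Lq where "Lq = substL (liftL n 1 L2) 0 Q"
    define M2' where "M2' = subst (lift n (Suc (Suc m)) M2) (Suc m) (lift (Suc m) 0 Q)"
    have lenLq: "length Lq = m" by (simp add: Lq_def m_def)
    show ?thesis
    proof (intro exI conjI allI impI)
      show "w = plug (L3 @ Lq) (Lam M2')"
        using psb(3) w0 by (simp add: lift_plug subst_plug plug_append Lq_def M2'_def n_def m_def add.commute)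
      fix X X' assume "X \<Rrightarrow> X'"
      then have "lift 1 0 X \<Rrightarrow> lift 1 0 X'" by (rule par_lift)
      with P have "plug L0 (ES M (lift (length L0) 0 (lift 1 0 X))) \<Rrightarrow> plug L2 (ES M2 (lift (length L2) 0 (lift 1 0 X')))"
        by blast
      from par.psb[OF psb(1) this]
      have "ES (plug L0 (ES M (lift (Suc (length L0)) 0 X))) N \<Rrightarrow>
            plug L3 (subst (lift n 1 (plug L2 (ES M2 (lift (Suc m) 0 X')))) 0 Q)"
        by (simp add: n_def m_def)
      moreover have "lift n (Suc m) (lift (Suc m) 0 X') = lift (n + Suc m) 0 X'"
        using lift_lift_merge[of 0 "Suc m" "Suc m" n X'] by simp
      moreover have "subst (lift (Suc (n + m)) 0 X') m (lift m 0 Q) = lift (n+m) 0 X'"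
        by (rule subst_lift_cancel) auto
      ultimately show "plug (N # L0) (ES M (lift (length (N # L0)) 0 X)) \<Rrightarrow> plug (L3 @ Lq) (ES M2' (lift (length (L3 @ Lq)) 0 X'))"
        by (simp add: lift_plug subst_plug plug_append Lq_def M2'_def n_def m_def add.commute)
    qed
  qed
qed


lemma K_bang:
  "plug L (Bang P) \<Rrightarrow> w \<Longrightarrow> \<exists>L2 P2. w = plug L2 (Bang P2) \<and> plug L P \<Rrightarrow> plug L2 P2 \<and>
     (\<forall>X X'. X \<Rrightarrow> X' \<longrightarrow> plug L (subst (lift (length L) 1 X) 0 P) \<Rrightarrow> plug L2 (subst (lift (length L2) 1 X') 0 P2))"
proof (induction L arbitrary: w)
  case Nil
  then show ?case by (auto elim!: parBangE intro!: exI[of _ "[]"] par_subst)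
next
  case (Cons N L0)
  from Cons.prems have "ES (plug L0 (Bang P)) N \<Rrightarrow> w" by simp
  then consider (pes) w0 N' where "w = ES w0 N'" "plug L0 (Bang P) \<Rrightarrow> w0" "N \<Rrightarrow> N'"
    | (psb) L3 Q M0' where "N \<Rrightarrow> plug L3 (Bang Q)" "plug L0 (Bang P) \<Rrightarrow> M0'" "w = plug L3 (subst (lift (length L3) 1 M0') 0 Q)"
    using parES_inv by blast
  then show ?case
  proof cases
    case pes
    from Cons.IH[OF pes(2)] obtain L2 P2 where w0: "w0 = plug L2 (Bang P2)"
      and P1: "plug L0 P \<Rrightarrow> plug L2 P2"
      and P: "\<forall>X X'. X \<Rrightarrow> X' \<longrightarrow> plug L0 (subst (lift (length L0) 1 X) 0 P) \<Rrightarrow> plug L2 (subst (lift (length L2) 1 X') 0 P2)"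
      by blast
    show ?thesis
    proof (intro exI conjI allI impI)
      show "w = plug (N' # L2) (Bang P2)" using pes w0 by simp
      show "plug (N # L0) P \<Rrightarrow> plug (N' # L2) P2" using P1 pes by (simp add: par.pes)
      fix X X' assume "X \<Rrightarrow> X'"
      then have "lift 1 1 X \<Rrightarrow> lift 1 1 X'" by (rule par_lift)
      with P have "plug L0 (subst (lift (length L0) 1 (lift 1 1 X)) 0 P) \<Rrightarrow> plug L2 (subst (lift (length L2) 1 (lift 1 1 X')) 0 P2)"
        by blast
      moreover have "\<And>k Y. lift k 1 (lift 1 1 Y) = lift (Suc k) 1 Y"
        using lift_lift_merge[of 1 1 1] by simp
      ultimately show "plug (N # L0) (subst (lift (length (N # L0)) 1 X) 0 P) \<Rrightarrow> plug (N' # L2) (subst (lift (length (N' # L2)) 1 X') 0 P2)"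
        using pes by (auto intro: par.pes)
    qed
  next
    case psb
    from Cons.IH[OF psb(2)] obtain L2 P2 where w0: "M0' = plug L2 (Bang P2)"
      and P1: "plug L0 P \<Rrightarrow> plug L2 P2"
      and P: "\<forall>X X'. X \<Rrightarrow> X' \<longrightarrow> plug L0 (subst (lift (length L0) 1 X) 0 P) \<Rrightarrow> plug L2 (subst (lift (length L2) 1 X') 0 P2)"
      by blast
    define n where "n = length L3"
    define m where "m = length L2"
    define Lq where "Lq = substL (liftL n 1 L2) 0 Q"
    define P2' where "P2' = subst (lift n (Suc m) P2) m (lift m 0 Q)"
    have lenLq: "length Lq = m" by (simp add: Lq_def m_def)
    show ?thesis
    proof (intro exI conjI allI impI)
      show "w = plug (L3 @ Lq) (Bang P2')"
        using psb(3) w0 by (simp add: lift_plug subst_plug plug_append Lq_def P2'_def n_def m_def add.commute)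
      show "plug (N # L0) P \<Rrightarrow> plug (L3 @ Lq) P2'"
        using par.psb[OF psb(1) P1]
        by (simp add: lift_plug subst_plug plug_append Lq_def P2'_def n_def m_def add.commute)
      fix X X' assume "X \<Rrightarrow> X'"
      then have "lift 1 1 X \<Rrightarrow> lift 1 1 X'" by (rule par_lift)
      with P have "plug L0 (subst (lift (length L0) 1 (lift 1 1 X)) 0 P) \<Rrightarrow> plug L2 (subst (lift (length L2) 1 (lift 1 1 X')) 0 P2)"
        by blast
      moreover have mg: "\<And>k Y. lift k 1 (lift 1 1 Y) = lift (Suc k) 1 Y"
        using lift_lift_merge[of 1 1 1] by simp
      ultimately have "plug L0 (subst (lift (Suc (length L0)) 1 X) 0 P) \<Rrightarrow> plug L2 (subst (lift (Suc m) 1 X') 0 P2)"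
        by (simp add: m_def)
      from par.psb[OF psb(1) this]
      have "ES (plug L0 (subst (lift (Suc (length L0)) 1 X) 0 P)) N \<Rrightarrow>
            plug L3 (subst (lift n 1 (plug L2 (subst (lift (Suc m) 1 X') 0 P2))) 0 Q)"
        by (simp add: n_def)
      moreover have "lift n (Suc m) (subst (lift (Suc m) 1 X') 0 P2) = subst (lift n (Suc (Suc m)) (lift (Suc m) 1 X')) 0 (lift n (Suc m) P2)"
        by (rule lift_subst1) simp
      moreover have "lift n (Suc (Suc m)) (lift (Suc m) 1 X') = lift (n + Suc m) 1 X'"
        by (rule lift_lift_merge) auto
      moreover have "subst (subst (lift (n + Suc m) 1 X') 0 (lift n (Suc m) P2)) m (lift m 0 Q)
          = subst (subst (lift (n + Suc m) 1 X') (Suc m) (lift 1 0 (lift m 0 Q))) 0 (subst (lift n (Suc m) P2) m (lift m 0 Q))"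
        by (rule subst_subst) simp
      moreover have "subst (lift (Suc (n + m)) 1 X') (Suc m) (lift 1 0 (lift m 0 Q)) = lift (n+m) 1 X'"
        by (rule subst_lift_cancel) auto
      ultimately show "plug (N # L0) (subst (lift (length (N # L0)) 1 X) 0 P) \<Rrightarrow> plug (L3 @ Lq) (subst (lift (length (L3 @ Lq)) 1 X') 0 P2')"
        by (simp add: lift_plug subst_plug plug_append Lq_def P2'_def n_def m_def add.commute)
    qed
  qed
qed


fun decL :: "trm \<Rightarrow> (trm list \<times> trm) option" where
  "decL (Lam M) = Some ([], M)"
| "decL (ES t u) = (case decL t of Some (L, M) \<Rightarrow> Some (u # L, M) | None \<Rightarrow> None)"
| "decL _ = None"

fun decB :: "trm \<Rightarrow> (trm list \<times> trm) option" where
  "decB (Bang M) = Some ([], M)"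
| "decB (ES t u) = (case decB t of Some (L, M) \<Rightarrow> Some (u # L, M) | None \<Rightarrow> None)"
| "decB _ = None"

lemma decL_plug[simp]: "decL (plug L (Lam M)) = Some (L, M)"
  by (induction L) auto

lemma decB_plug[simp]: "decB (plug L (Bang M)) = Some (L, M)"
  by (induction L) auto

lemma decL_Some: "decL X = Some (L, M) \<Longrightarrow> X = plug L (Lam M)"
  by (induction X arbitrary: L) (auto split: option.splits)

lemma decB_Some: "decB X = Some (L, M) \<Longrightarrow> X = plug L (Bang M)"
  by (induction X arbitrary: L) (auto split: option.splits)

fun dev :: "trm \<Rightarrow> trm" where
  "dev (Var i) = Var i"
| "dev Bot = Bot"
| "dev (Lam t) = Lam (dev t)"
| "dev (App t u) = (case decL (dev t) of Some (L, M) \<Rightarrow> plug L (ES M (lift (length L) 0 (dev u)))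
                     | None \<Rightarrow> App (dev t) (dev u))"
| "dev (ES t u) = (case decB (dev u) of Some (L, N) \<Rightarrow> plug L (subst (lift (length L) 1 (dev t)) 0 N)
                     | None \<Rightarrow> ES (dev t) (dev u))"
| "dev (Bang t) = Bang (dev t)"
| "dev (Der t) = (case decB (dev t) of Some (L, N) \<Rightarrow> plug L N | None \<Rightarrow> Der (dev t))"

lemma triangle: "t \<Rrightarrow> u \<Longrightarrow> u \<Rrightarrow> dev t"
proof (induction rule: par.induct)
  case (papp t t' u u')
  show ?case
  proof (cases "decL (dev t)")
    case None then show ?thesis using papp by (simp add: par.papp)
  next
    case (Some a)
    then obtain L M where a: "decL (dev t) = Some (L, M)" by (cases a) auto
    from decL_Some[OF a] papp.IH have "t' \<Rrightarrow> plug L (Lam M)" by simp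
    from par.pdB[OF this papp.IH(2)] show ?thesis using a by simp
  qed
next
  case (pes t t' u u')
  show ?case
  proof (cases "decB (dev u)")
    case None then show ?thesis using pes by (simp add: par.pes)
  next
    case (Some a)
    then obtain L M where a: "decB (dev u) = Some (L, M)" by (cases a) auto
    from decB_Some[OF a] pes.IH have "u' \<Rrightarrow> plug L (Bang M)" by simp
    from par.psb[OF this pes.IH(1)] show ?thesis using a by simp
  qed
next
  case (pder t t')
  show ?case
  proof (cases "decB (dev t)")
    case None then show ?thesis using pder by (simp add: par.pder)
  next
    case (Some a)
    then obtain L M where a: "decB (dev t) = Some (L, M)" by (cases a) auto
    from decB_Some[OF a] pder.IH have "t' \<Rrightarrow> plug L (Bang M)" by simp
    from par.pd[OF this] show ?thesis using a by simp
  qed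
next
  case (pdB t L M u u')
  from K_lam[OF pdB.IH(1)] obtain L2 M2 where d: "dev t = plug L2 (Lam M2)"
    and P: "\<forall>X X'. X \<Rrightarrow> X' \<longrightarrow> plug L (ES M (lift (length L) 0 X)) \<Rrightarrow> plug L2 (ES M2 (lift (length L2) 0 X'))"
    by blast
  show ?case using P pdB.IH(2) d by simp
next
  case (psb t L N M M')
  from K_bang[OF psb.IH(1)] obtain L2 P2 where d: "dev t = plug L2 (Bang P2)"
    and P: "\<forall>X X'. X \<Rrightarrow> X' \<longrightarrow> plug L (subst (lift (length L) 1 X) 0 N) \<Rrightarrow> plug L2 (subst (lift (length L2) 1 X') 0 P2)"
    by blast
  show ?case using P psb.IH(2) d by simp
next
  case (pd t L N)
  from K_bang[OF pd.IH] obtain L2 P2 where d: "dev t = plug L2 (Bang P2)"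
    and P: "plug L N \<Rrightarrow> plug L2 P2"
    by blast
  show ?case using P d by simp
qed (auto intro: par.intros)

lemma par_strip: "par\<^sup>*\<^sup>* t u2 \<Longrightarrow> t \<Rrightarrow> u1 \<Longrightarrow> \<exists>v. par\<^sup>*\<^sup>* u1 v \<and> u2 \<Rrightarrow> v"
proof (induction arbitrary: u1 rule: rtranclp_induct)
  case base then show ?case by blast
next
  case (step y z)
  from step.IH[OF step.prems] obtain v where v: "par\<^sup>*\<^sup>* u1 v" "y \<Rrightarrow> v" by blast
  have "v \<Rrightarrow> dev y" using triangle[OF v(2)] .
  moreover have "z \<Rrightarrow> dev y" using triangle[OF step.hyps(2)] .
  ultimately show ?case using v(1) by (meson rtranclp.rtrancl_into_rtrancl)
qed

lemma par_confl: "par\<^sup>*\<^sup>* t u1 \<Longrightarrow> par\<^sup>*\<^sup>* t u2 \<Longrightarrow> \<exists>v. par\<^sup>*\<^sup>* u1 v \<and> par\<^sup>*\<^sup>* u2 v"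
proof (induction arbitrary: u2 rule: rtranclp_induct)
  case base then show ?case by blast
next
  case (step y z)
  from step.IH[OF step.prems] obtain v where v: "par\<^sup>*\<^sup>* y v" "par\<^sup>*\<^sup>* u2 v" by blast
  from par_strip[OF v(1) step.hyps(2)] obtain w where "par\<^sup>*\<^sup>* z w" "v \<Rrightarrow> w" by blast
  then show ?case using v(2) by (meson rtranclp.rtrancl_into_rtrancl)
qed


lemma step_par: "step t u \<Longrightarrow> t \<Rrightarrow> u"
proof (induction rule: step.induct)
  case (root t u)
  then show ?case
  proof (cases rule: root_step.cases)
    case (dB L M N) then show ?thesis by (auto intro: par.pdB)
  next
    case (sbang M L N) then show ?thesis using par.psb[where t="plug L (Bang N)" and L=L and N=N and M=M and M'=M, OF par_refl par_refl] by simp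
  next
    case (dbang L N) then show ?thesis by (auto intro: par.pd)
  qed
qed (auto intro: par.intros)

lemma star_lam: "step\<^sup>*\<^sup>* t t' \<Longrightarrow> step\<^sup>*\<^sup>* (Lam t) (Lam t')"
  by (induction rule: rtranclp_induct) (auto intro: rtranclp.rtrancl_into_rtrancl step.lam)
lemma star_bang: "step\<^sup>*\<^sup>* t t' \<Longrightarrow> step\<^sup>*\<^sup>* (Bang t) (Bang t')"
  by (induction rule: rtranclp_induct) (auto intro: rtranclp.rtrancl_into_rtrancl step.bang)
lemma star_der: "step\<^sup>*\<^sup>* t t' \<Longrightarrow> step\<^sup>*\<^sup>* (Der t) (Der t')"
  by (induction rule: rtranclp_induct) (auto intro: rtranclp.rtrancl_into_rtrancl step.der)
lemma star_appL: "step\<^sup>*\<^sup>* t t' \<Longrightarrow> step\<^sup>*\<^sup>* (App t u) (App t' u)"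
  by (induction rule: rtranclp_induct) (auto intro: rtranclp.rtrancl_into_rtrancl step.appL)
lemma star_appR: "step\<^sup>*\<^sup>* t t' \<Longrightarrow> step\<^sup>*\<^sup>* (App u t) (App u t')"
  by (induction rule: rtranclp_induct) (auto intro: rtranclp.rtrancl_into_rtrancl step.appR)
lemma star_esL: "step\<^sup>*\<^sup>* t t' \<Longrightarrow> step\<^sup>*\<^sup>* (ES t u) (ES t' u)"
  by (induction rule: rtranclp_induct) (auto intro: rtranclp.rtrancl_into_rtrancl step.esL)
lemma star_esR: "step\<^sup>*\<^sup>* t t' \<Longrightarrow> step\<^sup>*\<^sup>* (ES u t) (ES u t')"
  by (induction rule: rtranclp_induct) (auto intro: rtranclp.rtrancl_into_rtrancl step.esR)

lemma par_star: "t \<Rrightarrow> u \<Longrightarrow> step\<^sup>*\<^sup>* t u"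
proof (induction rule: par.induct)
  case (papp t t' u u')
  then show ?case by (meson rtranclp_trans star_appL star_appR)
next
  case (pes t t' u u')
  then show ?case by (meson rtranclp_trans star_esL star_esR)
next
  case (pdB t L M u u')
  have "step\<^sup>*\<^sup>* (App t u) (App (plug L (Lam M)) u')"
    using pdB by (meson rtranclp_trans star_appL star_appR)
  moreover have "step (App (plug L (Lam M)) u') (plug L (ES M (lift (length L) 0 u')))"
    by (intro step.root root_step.dB)
  ultimately show ?case by (meson rtranclp.rtrancl_into_rtrancl)
next
  case (psb t L N M M')
  have "step\<^sup>*\<^sup>* (ES M t) (ES M' (plug L (Bang N)))"
    using psb by (meson rtranclp_trans star_esL star_esR)
  moreover have "step (ES M' (plug L (Bang N))) (plug L (subst (lift (length L) 1 M') 0 N))"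
    by (intro step.root root_step.sbang)
  ultimately show ?case by (meson rtranclp.rtrancl_into_rtrancl)
next
  case (pd t L N)
  have "step\<^sup>*\<^sup>* (Der t) (Der (plug L (Bang N)))"
    using pd by (meson star_der)
  moreover have "step (Der (plug L (Bang N))) (plug L N)"
    by (intro step.root root_step.dbang)
  ultimately show ?case by (meson rtranclp.rtrancl_into_rtrancl)
qed (auto intro: star_lam star_bang star_der)

lemma star_parstar: "step\<^sup>*\<^sup>* t u \<Longrightarrow> par\<^sup>*\<^sup>* t u"
  by (induction rule: rtranclp_induct) (auto intro: rtranclp.rtrancl_into_rtrancl step_par)

lemma parstar_star: "par\<^sup>*\<^sup>* t u \<Longrightarrow> step\<^sup>*\<^sup>* t u"
  by (induction rule: rtranclp_induct) (auto intro: rtranclp_trans par_star)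

lemma step_confl: "step\<^sup>*\<^sup>* t u1 \<Longrightarrow> step\<^sup>*\<^sup>* t u2 \<Longrightarrow> \<exists>v. step\<^sup>*\<^sup>* u1 v \<and> step\<^sup>*\<^sup>* u2 v"
  using par_confl[OF star_parstar star_parstar] parstar_star by blast



lemma forbidden_simps[simp]:
  "forbidden (Var i) = False" "forbidden Bot = False" "forbidden (Lam t) = False" "forbidden (Bang t) = False"
  "forbidden (App a b) = ((\<exists>L. a = plug L Bot) \<or> (\<exists>L M. a = plug L (Lam M)))"
  "forbidden (ES a b) = ((\<exists>L. b = plug L Bot) \<or> (\<exists>L M. b = plug L (Bang M)))"
  "forbidden (Der a) = ((\<exists>L. a = plug L Bot) \<or> (\<exists>L M. a = plug L (Bang M)))"
  unfolding forbidden_def by auto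

lemma approximant_simps[simp]:
  "approximant (Var i) = True" "approximant Bot = True"
  "approximant (Lam t) = approximant t" "approximant (Bang t) = approximant t"
  "approximant (App a b) = (\<not> forbidden (App a b) \<and> approximant a \<and> approximant b)"
  "approximant (ES a b) = (\<not> forbidden (ES a b) \<and> approximant a \<and> approximant b)"
  "approximant (Der a) = (\<not> forbidden (Der a) \<and> approximant a)"
  unfolding approximant_def by auto

lemma le_plug: "X \<sqsubseteq> plug L H \<Longrightarrow> (\<exists>L'. X = plug L' Bot) \<or> (\<exists>L' Y. X = plug L' Y \<and> Y \<sqsubseteq> H)"
proof (induction L arbitrary: X)
  case Nil then show ?case by (metis plug.simps(1))
next
  case (Cons N L0)
  from Cons.prems have "X \<sqsubseteq> ES (plug L0 H) N" by simp
  then have "X = Bot \<or> (\<exists>A A'. X = ES A A' \<and> A \<sqsubseteq> plug L0 H)"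
    by (cases rule: approx_le.cases) auto
  then show ?case
  proof
    assume "X = Bot" then show ?thesis by (metis plug.simps(1))
  next
    assume "\<exists>A A'. X = ES A A' \<and> A \<sqsubseteq> plug L0 H"
    then obtain A A' where X: "X = ES A A'" and A: "A \<sqsubseteq> plug L0 H" by blast
    from Cons.IH[OF A] show ?thesis unfolding X by (metis plug.simps(2))
  qed
qed

inductive_cases leLamE: "X \<sqsubseteq> Lam M"
inductive_cases leBangE: "X \<sqsubseteq> Bang M"
inductive_cases leAppE: "X \<sqsubseteq> App a b"
inductive_cases leESE: "X \<sqsubseteq> ES a b"
inductive_cases leDerE: "X \<sqsubseteq> Der a"
inductive_cases leVarE: "X \<sqsubseteq> Var i"
inductive_cases leBotE: "X \<sqsubseteq> Bot"
inductive_cases leLamL: "Lam a \<sqsubseteq> C"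
inductive_cases leBangL: "Bang a \<sqsubseteq> C"
inductive_cases leAppL: "App a b \<sqsubseteq> C"
inductive_cases leESL: "ES a b \<sqsubseteq> C"
inductive_cases leDerL: "Der a \<sqsubseteq> C"

lemma le_plug_lam: "X \<sqsubseteq> plug L (Lam M) \<Longrightarrow> (\<exists>L'. X = plug L' Bot) \<or> (\<exists>L' M'. X = plug L' (Lam M'))"
  using le_plug by (metis leLamE)

lemma le_plug_bang: "X \<sqsubseteq> plug L (Bang M) \<Longrightarrow> (\<exists>L'. X = plug L' Bot) \<or> (\<exists>L' M'. X = plug L' (Bang M'))"
  using le_plug by (metis leBangE)

lemma stable_step: "step N N' \<Longrightarrow> approximant A \<Longrightarrow> A \<sqsubseteq> N \<Longrightarrow> A \<sqsubseteq> N'"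
proof (induction arbitrary: A rule: step.induct)
  case (root t u)
  from root.hyps show ?case
  proof (cases rule: root_step.cases)
    case (dB L M N)
    from root.prems(2) dB(1) show ?thesis
      apply (cases rule: leAppE)
      using root.prems(1) le_plug_lam by (auto intro: approx_le.bot)
  next
    case (sbang M L N)
    from root.prems(2) sbang(1) show ?thesis
      apply (cases rule: leESE)
      using root.prems(1) le_plug_bang by (auto intro: approx_le.bot)
  next
    case (dbang L N)
    from root.prems(2) dbang(1) show ?thesis
      apply (cases rule: leDerE)
      using root.prems(1) le_plug_bang by (auto intro: approx_le.bot)
  qed
next
  case (lam t u) then show ?case by (auto elim!: leLamE intro: approx_le.intros)
next
  case (appL t u s) then show ?case by (auto elim!: leAppE intro: approx_le.intros)
next
  case (appR t u s) then show ?case by (auto elim!: leAppE intro: approx_le.intros)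
next
  case (esL t u s) then show ?case by (auto elim!: leESE intro: approx_le.intros)
next
  case (esR t u s) then show ?case by (auto elim!: leESE intro: approx_le.intros)
next
  case (bang t u) then show ?case by (auto elim!: leBangE intro: approx_le.intros)
next
  case (der t u) then show ?case by (auto elim!: leDerE intro: approx_le.intros)
qed

lemma stable_star: "step\<^sup>*\<^sup>* N N' \<Longrightarrow> approximant A \<Longrightarrow> A \<sqsubseteq> N \<Longrightarrow> A \<sqsubseteq> N'"
  by (induction rule: rtranclp_induct) (auto intro: stable_step)

lemma le_trans: "A \<sqsubseteq> B \<Longrightarrow> B \<sqsubseteq> C \<Longrightarrow> A \<sqsubseteq> C"
proof (induction arbitrary: C rule: approx_le.induct)
  case (bot B) show ?case by (rule approx_le.bot)
next
  case (var i) then show ?case by simp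
qed (auto elim!: leLamL leAppL leESL leBangL leDerL intro: approx_le.intros)


fun join :: "trm \<Rightarrow> trm \<Rightarrow> trm" where
  "join Bot y = y"
| "join x Bot = x"
| "join (Lam a) (Lam b) = Lam (join a b)"
| "join (App a b) (App c d) = App (join a c) (join b d)"
| "join (ES a b) (ES c d) = ES (join a c) (join b d)"
| "join (Bang a) (Bang b) = Bang (join a b)"
| "join (Der a) (Der b) = Der (join a b)"
| "join x y = x"

lemma le_refl[simp]: "A \<sqsubseteq> A"
  by (induction A) (auto intro: approx_le.intros)

lemma join_le: "A1 \<sqsubseteq> N \<Longrightarrow> A2 \<sqsubseteq> N \<Longrightarrow> join A1 A2 \<sqsubseteq> N \<and> A1 \<sqsubseteq> join A1 A2 \<and> A2 \<sqsubseteq> join A1 A2"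
proof (induction N arbitrary: A1 A2)
  case (Var i) then show ?case by (auto elim!: leVarE intro: approx_le.intros)
next
  case Bot then show ?case by (auto elim!: leBotE intro: approx_le.intros)
next
  case (Lam B) from Lam.prems show ?case
    by (auto elim!: leLamE intro: approx_le.intros) (metis Lam.IH approx_le.lam)+
next
  case (Bang B) from Bang.prems show ?case
    by (auto elim!: leBangE intro: approx_le.intros) (metis Bang.IH approx_le.bang)+
next
  case (Der B) from Der.prems show ?case
    by (auto elim!: leDerE intro: approx_le.intros) (metis Der.IH approx_le.der)+
next
  case (App B C) from App.prems show ?case
    by (auto elim!: leAppE intro: approx_le.intros) (metis App.IH approx_le.app)+
next
  case (ES B C) from ES.prems show ?case
    by (auto elim!: leESE intro: approx_le.intros) (metis ES.IH approx_le.es)+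
qed

lemma join_Bot: "join X Y = Bot \<Longrightarrow> X = Bot"
  by (cases X; cases Y) auto
lemma join_Lam: "join X Y = Lam M \<Longrightarrow> X = Bot \<or> (\<exists>M'. X = Lam M')"
  by (cases X; cases Y) auto
lemma join_Bang: "join X Y = Bang M \<Longrightarrow> X = Bot \<or> (\<exists>M'. X = Bang M')"
  by (cases X; cases Y) auto
lemma join_ES: "join X Y = ES a b \<Longrightarrow> X = Bot \<or> X = ES a b \<or> (\<exists>a1 b1 a2 b2. X = ES a1 b1 \<and> a = join a1 a2)"
  by (cases X; cases Y) auto

lemma join_plug: "join X1 X2 = plug L H \<Longrightarrow>
   (\<exists>L'. X1 = plug L' Bot) \<or> (\<exists>L'. X1 = plug L' H) \<or> (\<exists>L' H1 H2. X1 = plug L' H1 \<and> H = join H1 H2)"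
proof (induction L arbitrary: X1 X2)
  case Nil then show ?case by (metis plug.simps(1))
next
  case (Cons N L0)
  from join_ES[of X1 X2 "plug L0 H" N] Cons.prems
  consider "X1 = Bot" | "X1 = plug (N # L0) H" | a1 b1 a2 where "X1 = ES a1 b1" "plug L0 H = join a1 a2"
    by auto
  then show ?case
  proof cases
    case 1 then show ?thesis by (metis plug.simps(1))
  next
    case 2 then show ?thesis by blast
  next
    case 3
    from Cons.IH[OF 3(2)[symmetric]] show ?thesis unfolding 3(1) by (metis plug.simps(2))
  qed
qed

lemma join_plug_lam: "join X1 X2 = plug L (Lam M) \<Longrightarrow> (\<exists>L'. X1 = plug L' Bot) \<or> (\<exists>L' M'. X1 = plug L' (Lam M'))"
  by (drule join_plug) (metis join_Lam)
lemma join_plug_bang: "join X1 X2 = plug L (Bang M) \<Longrightarrow> (\<exists>L'. X1 = plug L' Bot) \<or> (\<exists>L' M'. X1 = plug L' (Bang M'))"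
  by (drule join_plug) (metis join_Bang)
lemma join_plug_bot: "join X1 X2 = plug L Bot \<Longrightarrow> (\<exists>L'. X1 = plug L' Bot)"
  by (drule join_plug) (metis join_Bot)

lemma nf_app: "\<not> forbidden (App a b) \<Longrightarrow> \<not> forbidden (App (join a c) d)"
  using join_plug_lam[of a c] join_plug_bot[of a c] by auto
lemma nf_es: "\<not> forbidden (ES a b) \<Longrightarrow> \<not> forbidden (ES d (join b c))"
  using join_plug_bang[of b c] join_plug_bot[of b c] by auto
lemma nf_der: "\<not> forbidden (Der a) \<Longrightarrow> \<not> forbidden (Der (join a c))"
  using join_plug_bang[of a c] join_plug_bot[of a c] by auto

lemma join_approx: "approximant A1 \<Longrightarrow> approximant A2 \<Longrightarrow> approximant (join A1 A2)"
proof (induction A1 arbitrary: A2)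
  case (App a b)
  show ?case
  proof (cases A2)
    case (App c d)
    have "\<not> forbidden (App (join a c) (join b d))" using App.prems nf_app[of a b c "join b d"] by simp
    then show ?thesis using App.prems App.IH App by (simp del: forbidden_simps)
  qed (use App.prems in auto)
next
  case (ES a b)
  show ?case
  proof (cases A2)
    case (ES c d)
    have "\<not> forbidden (ES (join a c) (join b d))" using ES.prems nf_es[of a b "join a c" d] by simp
    then show ?thesis using ES.prems ES.IH ES by (simp del: forbidden_simps)
  qed (use ES.prems in auto)
next
  case (Der a)
  show ?case
  proof (cases A2)
    case (Der c)
    have "\<not> forbidden (Der (join a c))" using Der.prems nf_der[of a c] by simp
    then show ?thesis using Der.prems Der.IH Der by (simp del: forbidden_simps)
  qed (use Der.prems in auto)
next
  case (Lam a) then show ?case by (cases A2) auto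
next
  case (Bang a) then show ?case by (cases A2) auto
next
  case (Var x) then show ?case by (cases A2) auto
qed auto

theorem mainTheorem2:
  assumes "bot_free M"
  shows "(\<forall>A \<in> \<A> M. \<forall>B. approximant B \<and> B \<sqsubseteq> A \<longrightarrow> B \<in> \<A> M)
       \<and> (\<forall>A1 \<in> \<A> M. \<forall>A2 \<in> \<A> M. \<exists>A3 \<in> \<A> M. A1 \<sqsubseteq> A3 \<and> A2 \<sqsubseteq> A3)"
proof (intro conjI ballI allI impI)
  fix A B assume "A \<in> \<A> M" "approximant B \<and> B \<sqsubseteq> A"
  then show "B \<in> \<A> M" unfolding approximants_def by (auto intro: le_trans)
next
  fix A1 A2 assume a1: "A1 \<in> \<A> M" and a2: "A2 \<in> \<A> M"
  from a1 obtain N1 where n1: "approximant A1" "step\<^sup>*\<^sup>* M N1" "A1 \<sqsubseteq> N1" unfolding approximants_def by auto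
  from a2 obtain N2 where n2: "approximant A2" "step\<^sup>*\<^sup>* M N2" "A2 \<sqsubseteq> N2" unfolding approximants_def by auto
  from step_confl[OF n1(2) n2(2)] obtain N3 where n3: "step\<^sup>*\<^sup>* N1 N3" "step\<^sup>*\<^sup>* N2 N3" by blast
  have l1: "A1 \<sqsubseteq> N3" using stable_star[OF n3(1) n1(1) n1(3)] .
  have l2: "A2 \<sqsubseteq> N3" using stable_star[OF n3(2) n2(1) n2(3)] .
  have "step\<^sup>*\<^sup>* M N3" using n1(2) n3(1) by (rule rtranclp_trans)
  then have "join A1 A2 \<in> \<A> M"
    unfolding approximants_def using join_approx[OF n1(1) n2(1)] join_le[OF l1 l2] by auto
  then show "\<exists>A3 \<in> \<A> M. A1 \<sqsubseteq> A3 \<and> A2 \<sqsubseteq> A3" using join_le[OF l1 l2] by blast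
qed


end
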